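(* For $z\in\mathbb{D}$ (the open unit disk), the Green function $g_z$ of the Laplacian on $\mathbb{D}$ with pole at $z$ satisfies $\|g_z\|_2\leq\|g_0\|_2=(8\pi)^{-1/2}$, where $\|\cdot\|_2$ is the $L^2(\mathbb{D})$ norm with respect to area measure.
   Context: The Green function of the Laplacian on $\mathbb{D}$ is $g_z(\xi)=\frac{1}{2\pi}\ln\left|\frac{\xi-z}{1-\bar z\xi}\right|$, i.e. the solution of $\Delta g_z=\delta_z$ in $\mathbb{D}$ with $g_z=0$ on $\partial\mathbb{D}$. *)

theory Defs
  imports "HOL-Analysis.Analysis"
begin

definition green_disc :: "complex \<Rightarrow> complex \<Rightarrow> real" where
  "green_disc z \<xi> = ln (cmod ((\<xi> - z) / (1 - cnj z * \<xi>))) / (2 * pi)"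

definition L2_norm_disc :: "(complex \<Rightarrow> real) \<Rightarrow> real" where
  "L2_norm_disc f = sqrt (\<integral>\<xi>\<in>ball 0 1. (f \<xi>)\<^sup>2 \<partial>lborel)"

end

theory Submission
  imports Defs "HOL-Real_Asymp.Real_Asymp"
begin


lemma lnsq_has_integral:
  fixes s :: real assumes s: "0 < s" "s \<le> 1"
  shows "((\<lambda>r. - 2 * ln r / r) has_integral (ln s)^2) {s..1}"
proof -
  define F :: "real \<Rightarrow> real" where "F = (\<lambda>r. 0 - (ln r)^2)"
  have "((\<lambda>r. - 2 * ln r / r) has_integral (F 1 - F s)) {s..1}"
  proof (rule fundamental_theorem_of_calculus)
    fix x assume x: "x \<in> {s..1}"
    hence "x > 0" using s by auto
    thus "(F has_vector_derivative (- 2 * ln x / x)) (at x within {s..1})"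
      unfolding F_def by (auto intro!: derivative_eq_intros simp: has_real_derivative_iff_has_vector_derivative[symmetric] field_simps)
  qed (use s in auto)
  thus ?thesis by (simp add: F_def)
qed

lemma rlnr_has_integral:
  "((\<lambda>r::real. - 2 * r * ln r) has_integral 1/2) {0..1}"
proof -
  define F where "F = (\<lambda>r::real. (1/2) * r^2 - r^2 * ln r)"
  have lim: "((\<lambda>r::real. r^2 * ln r) \<longlongrightarrow> 0) (at_right 0)" by real_asymp
  have cont: "continuous_on {0..1} F"
  proof -
    have "continuous_on {0..1} (\<lambda>r::real. r^2 * ln r)"
    proof (clarsimp simp: continuous_on_eq_continuous_within)
      fix x :: real assume x: "0 \<le> x" "x \<le> 1"
      show "continuous (at x within {0..1}) (\<lambda>r. r^2 * ln r)"
      proof (cases "x = 0")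
        case True
        have "((\<lambda>r::real. r^2 * ln r) \<longlongrightarrow> 0) (at 0 within {0..1})"
        proof -
          have "at (0::real) within {0..1} = at_right 0"
            by (simp add: at_within_Icc_at_right)
          thus ?thesis using lim by simp
        qed
        thus ?thesis using True by (simp add: continuous_within)
      next
        case False
        hence "x > 0" using x by auto
        hence "isCont (\<lambda>r. r^2 * ln r) x" by (auto intro!: continuous_intros)
        thus ?thesis by (simp add: continuous_at_imp_continuous_within)
      qed
    qed
    thus ?thesis unfolding F_def by (rule continuous_on_diff[rotated]) (intro continuous_intros)
  qed
  have "((\<lambda>r::real. - 2 * r * ln r) has_integral (F 1 - F 0)) {0..1}"
  proof (rule fundamental_theorem_of_calculus_interior)
    fix x :: real assume "x \<in> {0<..<1}"
    hence "x > 0" by auto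
    thus "(F has_vector_derivative (- 2 * x * ln x)) (at x)"
      unfolding F_def
      by (auto intro!: derivative_eq_intros simp: has_real_derivative_iff_has_vector_derivative[symmetric] field_simps power2_eq_square)
  qed (use cont in auto)
  thus ?thesis by (simp add: F_def)
qed




definition phi :: "complex \<Rightarrow> complex \<Rightarrow> complex" where
  "phi z \<xi> = (\<xi> - z) / (1 - cnj z * \<xi>)"

lemma phi_meas[measurable]: "phi z \<in> borel_measurable borel"
  unfolding phi_def by measurable

definition K :: "complex \<Rightarrow> complex \<Rightarrow> real \<Rightarrow> real" where
  "K z \<xi> r = indicator (ball 0 1) \<xi> * ((- 2 * ln r / r) * indicator {0<..1} r *
     (if cmod (phi z \<xi>) \<le> r then 1 else 0))"

lemma ball_sets[measurable]: "ball (0::complex) 1 \<in> sets borel"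
  by simp

lemma pred_phi[measurable]: "Measurable.pred (lborel \<Otimes>\<^sub>M lborel) (\<lambda>x. cmod (phi z (fst x)) \<le> (snd x::real))"
  unfolding pred_def by measurable

lemma K_meas: "(\<lambda>(\<xi>, r). ennreal (K z \<xi> r)) \<in> borel_measurable (lborel \<Otimes>\<^sub>M lborel)"
  unfolding K_def by measurable

lemma poly_id1:
  fixes a b p q r :: real
  shows "((1 - r^2*(p^2+q^2))*a - (1-r^2)*p)^2 + ((1 - r^2*(p^2+q^2))*b - (1-r^2)*q)^2 - r^2*(1-(p^2+q^2))^2
   = (1 - r^2*(p^2+q^2))*(((a-p)^2+(b-q)^2) - r^2*((1-(p*a+q*b))^2 + (p*b-q*a)^2))"
  by (simp add: algebra_simps power2_eq_square)

lemma poly_id2: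
  fixes a b p q :: real
  shows "((1-(p*a+q*b))^2 + (p*b-q*a)^2) - ((a-p)^2+(b-q)^2) = (1 - (a^2+b^2)) * (1 - (p^2+q^2))"
  by (simp add: algebra_simps power2_eq_square)




lemma denom_nz:
  assumes "cmod z < 1" "cmod \<xi> < 1"
  shows "1 - cnj z * \<xi> \<noteq> 0"
proof
  assume "1 - cnj z * \<xi> = 0"
  hence "cnj z * \<xi> = 1" by simp
  hence "cmod z * cmod \<xi> = 1" by (metis complex_mod_cnj norm_mult norm_one)
  moreover have "cmod z * cmod \<xi> < 1" using assms mult_strict_mono[of "cmod z" 1 "cmod \<xi>" 1] by simp
  ultimately show False by simp
qed

lemma phi_lt1:
  assumes z: "cmod z < 1" and x: "cmod \<xi> < 1"
  shows "cmod (phi z \<xi>) < 1"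
proof -
  have nz: "1 - cnj z * \<xi> \<noteq> 0" using denom_nz[OF z x] .
  have e1: "(cmod (\<xi> - z))^2 = (Re \<xi> - Re z)^2 + (Im \<xi> - Im z)^2" by (simp add: cmod_power2)
  have e2: "(cmod (1 - cnj z * \<xi>))^2 = (1 - (Re z * Re \<xi> + Im z * Im \<xi>))^2 + (Re z * Im \<xi> - Im z * Re \<xi>)^2"
    by (subst cmod_power2) (simp add: algebra_simps power2_eq_square)
  have "(cmod \<xi>)^2 < 1" using x by (simp add: abs_square_less_1)
  hence "(Re \<xi>)^2 + (Im \<xi>)^2 < 1" by (simp add: cmod_power2)
  moreover have "(cmod z)^2 < 1" using z by (simp add: abs_square_less_1)
  hence "(Re z)^2 + (Im z)^2 < 1" by (simp add: cmod_power2)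
  ultimately have "(1 - ((Re \<xi>)^2 + (Im \<xi>)^2)) * (1 - ((Re z)^2 + (Im z)^2)) > 0" by simp
  hence "(cmod (\<xi> - z))^2 < (cmod (1 - cnj z * \<xi>))^2"
    using poly_id2[of "Re z" "Re \<xi>" "Im z" "Im \<xi>"] unfolding e1 e2 by linarith
  hence "cmod (\<xi> - z) < cmod (1 - cnj z * \<xi>)"
    by (meson norm_ge_zero power_less_imp_less_base)
  thus ?thesis using nz unfolding phi_def by (simp add: norm_divide divide_less_eq)
qed

lemma apollonius:
  assumes z: "cmod z < 1" and x: "cmod \<xi> < 1" and r: "0 < r" "r \<le> 1"
    and le: "cmod (phi z \<xi>) \<le> r"
  shows "dist \<xi> (z * of_real ((1 - r^2) / (1 - r^2 * (cmod z)^2))) \<le> r * (1 - (cmod z)^2) / (1 - r^2 * (cmod z)^2)"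
proof -
  define t where "t = (cmod z)^2"
  define D where "D = 1 - r^2 * t"
  have t1: "t < 1" "t \<ge> 0" unfolding t_def using z by (auto simp: power_less_one_iff abs_square_less_1)
  have "r^2 \<le> 1" using r by (simp add: power_le_one)
  hence "r^2 * t \<le> t" using t1 mult_left_le_one_le[of t "r^2"] by simp
  hence "r^2 * t < 1" using t1 by simp
  hence Dpos: "D > 0" unfolding D_def by simp
  have nz: "1 - cnj z * \<xi> \<noteq> 0" using denom_nz[OF z x] .
  have "cmod (\<xi> - z) \<le> r * cmod (1 - cnj z * \<xi>)"
    using le nz unfolding phi_def by (simp add: norm_divide divide_le_eq)
  hence "(cmod (\<xi> - z))^2 \<le> (r * cmod (1 - cnj z * \<xi>))^2"
    by (rule power_mono) auto
  hence A: "(cmod (\<xi> - z))^2 \<le> r^2 * (cmod (1 - cnj z * \<xi>))^2" by (simp add: power_mult_distrib)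
  have e1: "(cmod (\<xi> - z))^2 = (Re \<xi> - Re z)^2 + (Im \<xi> - Im z)^2" by (simp add: cmod_power2)
  have e2: "(cmod (1 - cnj z * \<xi>))^2 = (1 - (Re z * Re \<xi> + Im z * Im \<xi>))^2 + (Re z * Im \<xi> - Im z * Re \<xi>)^2"
    by (subst cmod_power2) (simp add: algebra_simps power2_eq_square)
  have et: "t = (Re z)^2 + (Im z)^2" unfolding t_def by (simp add: cmod_power2)
  have e3: "(cmod (of_real D * \<xi> - of_real (1 - r^2) * z))^2
      = (D * Re \<xi> - (1-r^2) * Re z)^2 + (D * Im \<xi> - (1-r^2) * Im z)^2"
    by (simp add: cmod_power2)
  have "(cmod (of_real D * \<xi> - of_real (1 - r^2) * z))^2 - r^2 * (1 - t)^2
     = D * ((cmod (\<xi> - z))^2 - r^2 * (cmod (1 - cnj z * \<xi>))^2)"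
    unfolding e1 e2 e3 unfolding D_def et by (rule poly_id1[of r "Re z" "Im z" "Re \<xi>" "Im \<xi>"])
  also have "\<dots> \<le> 0" using A Dpos by (simp add: mult_nonneg_nonpos)
  finally have sq: "(cmod (of_real D * \<xi> - of_real (1 - r^2) * z))^2 \<le> (r * (1 - t))^2"
    by (simp add: power_mult_distrib)
  have B: "cmod (of_real D * \<xi> - of_real (1 - r^2) * z) \<le> r * (1 - t)"
    by (rule power2_le_imp_le[OF sq]) (use r t1 in auto)
  have c: "complex_of_real D * complex_of_real ((1 - r^2)/D) = complex_of_real (1 - r^2)"
    unfolding of_real_mult[symmetric] using Dpos by simp
  have "of_real D * (\<xi> - z * of_real ((1 - r^2) / D)) = of_real D * \<xi> - z * (of_real D * of_real ((1 - r^2) / D))"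
    by (simp add: algebra_simps)
  also have "\<dots> = of_real D * \<xi> - of_real (1 - r^2) * z" by (simp only: c mult.commute)
  finally have "of_real D * \<xi> - of_real (1 - r^2) * z = of_real D * (\<xi> - z * of_real ((1 - r^2) / D))" by simp
  hence "cmod (of_real D * \<xi> - of_real (1 - r^2) * z) = D * dist \<xi> (z * of_real ((1 - r^2) / D))"
    using Dpos by (simp add: norm_mult dist_norm)
  with B have "D * dist \<xi> (z * of_real ((1 - r^2) / D)) \<le> r * (1 - t)" by simp
  hence "dist \<xi> (z * of_real ((1 - r^2) / D)) \<le> r * (1 - t) / D"
    using Dpos by (simp add: pos_le_divide_eq mult.commute)
  thus ?thesis unfolding D_def t_def .
qed




lemma S_sets[measurable]: "{\<xi>. cmod (phi z \<xi>) \<le> r} \<in> sets borel"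
proof -
  have "{\<xi>. cmod (phi z \<xi>) \<le> r} = {\<xi> \<in> space borel. cmod (phi z \<xi>) \<le> r}" by simp
  also have "\<dots> \<in> sets borel" by measurable
  finally show ?thesis .
qed

lemma meas_bound:
  assumes z: "cmod z < 1" and r: "0 < r" "r \<le> 1"
  shows "emeasure lborel (ball 0 1 \<inter> {\<xi>. cmod (phi z \<xi>) \<le> r}) \<le> ennreal (pi * r^2)"
proof -
  define t where "t = (cmod z)^2"
  define c where "c = z * of_real ((1 - r^2) / (1 - r^2 * t))"
  define \<rho> where "\<rho> = r * (1 - t) / (1 - r^2 * t)"
  have t1: "t < 1" "t \<ge> 0" unfolding t_def using z by (auto simp: abs_square_less_1)
  have r2: "r^2 \<le> 1" using r by (simp add: power_le_one)
  hence "r^2 * t \<le> t" using t1 mult_left_le_one_le[of t "r^2"] by simp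
  hence Dpos: "1 - r^2 * t > 0" using t1 by simp
  have sub: "ball 0 1 \<inter> {\<xi>. cmod (phi z \<xi>) \<le> r} \<subseteq> cball c \<rho>"
  proof
    fix \<xi> assume "\<xi> \<in> ball 0 1 \<inter> {\<xi>. cmod (phi z \<xi>) \<le> r}"
    hence "cmod \<xi> < 1" "cmod (phi z \<xi>) \<le> r" by auto
    from apollonius[OF z this(1) r this(2)] show "\<xi> \<in> cball c \<rho>"
      unfolding c_def \<rho>_def t_def by (simp add: dist_commute)
  qed
  have rho0: "\<rho> \<ge> 0" unfolding \<rho>_def using r t1 Dpos by auto
  have "1 - t \<le> 1 - r^2 * t" using \<open>r^2 * t \<le> t\<close> by simp
  hence "r * (1 - t) \<le> r * (1 - r^2 * t)" using r by (intro mult_left_mono) auto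
  hence "\<rho> \<le> r" unfolding \<rho>_def using Dpos by (simp add: divide_le_eq)
  hence rho_le: "\<rho>^2 \<le> r^2" using rho0 by (intro power_mono) auto
  have "emeasure lborel (ball 0 1 \<inter> {\<xi>. cmod (phi z \<xi>) \<le> r}) \<le> emeasure lborel (cball c \<rho>)"
    by (rule emeasure_mono[OF sub]) simp
  also have "\<dots> = ennreal (pi * \<rho>^2)"
    using emeasure_cball[OF rho0, of c] by (simp add: unit_ball_vol_2)
  also have "\<dots> \<le> ennreal (pi * r^2)"
    using rho_le by (intro ennreal_leI mult_left_mono) auto
  finally show ?thesis .
qed

lemma meas_eq0:
  assumes r: "0 < r" "r \<le> 1"
  shows "emeasure lborel (ball 0 1 \<inter> {\<xi>. cmod (phi 0 \<xi>) \<le> r}) = ennreal (pi * r^2)"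
proof (cases "r = 1")
  case True
  have "ball 0 1 \<inter> {\<xi>. cmod (phi 0 \<xi>) \<le> r} = ball (0::complex) 1"
    using True by (auto simp: phi_def)
  thus ?thesis using emeasure_ball[of 1 "0::complex"] True by (simp add: unit_ball_vol_2)
next
  case False
  have "ball 0 1 \<inter> {\<xi>. cmod (phi 0 \<xi>) \<le> r} = cball (0::complex) r"
    using False r by (auto simp: phi_def)
  thus ?thesis using emeasure_cball[of r "0::complex"] r by (simp add: unit_ball_vol_2 mult.commute)
qed




definition G :: "complex \<Rightarrow> complex \<Rightarrow> real" where
  "G z \<xi> = (ln (cmod (phi z \<xi>)))^2"

lemma w_nonneg: "0 < r \<Longrightarrow> r \<le> (1::real) \<Longrightarrow> 0 \<le> - 2 * ln r / r"
  by (simp add: divide_nonpos_pos)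

lemma w_nonneg2: "0 < r \<Longrightarrow> r \<le> (1::real) \<Longrightarrow> 2 * ln r / r \<le> 0"
  by (simp add: divide_nonpos_pos)

lemma pointwise:
  assumes z: "cmod z < 1"
  shows "ennreal (indicator (ball 0 1) \<xi> * G z \<xi>) \<le> (\<integral>\<^sup>+r. ennreal (K z \<xi> r) \<partial>lborel)"
    and "\<xi> \<noteq> z \<Longrightarrow> ennreal (indicator (ball 0 1) \<xi> * G z \<xi>) = (\<integral>\<^sup>+r. ennreal (K z \<xi> r) \<partial>lborel)"
proof -
  have main: "ennreal (indicator (ball 0 1) \<xi> * G z \<xi>) = (\<integral>\<^sup>+r. ennreal (K z \<xi> r) \<partial>lborel)"
    if nz: "\<xi> \<noteq> z"
  proof (cases "\<xi> \<in> ball 0 1")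
    case False
    thus ?thesis by (simp add: K_def)
  next
    case True
    hence x: "cmod \<xi> < 1" by simp
    define s where "s = cmod (phi z \<xi>)"
    have dnz: "1 - cnj z * \<xi> \<noteq> 0" using denom_nz[OF z x] .
    have s0: "s > 0" unfolding s_def phi_def using nz dnz by simp
    have s1: "s < 1" unfolding s_def using phi_lt1[OF z x] .
    have "(\<integral>\<^sup>+r. ennreal (K z \<xi> r) \<partial>lborel) = (\<integral>\<^sup>+r. ennreal (- 2 * ln r / r) * indicator {s..1} r \<partial>lborel)"
    proof (rule nn_integral_cong)
      fix r :: real
      show "ennreal (K z \<xi> r) = ennreal (- 2 * ln r / r) * indicator {s..1} r"
        using True s0 unfolding K_def s_def[symmetric] by (auto simp: indicator_def)
    qed
    also have "\<dots> = ennreal ((ln s)^2)"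
      by (rule nn_integral_has_integral_lebesgue'[OF _ lnsq_has_integral]) (use s0 s1 in \<open>auto intro!: w_nonneg w_nonneg2\<close>)
    finally show ?thesis using True unfolding G_def s_def by simp
  qed
  thus "\<xi> \<noteq> z \<Longrightarrow> ennreal (indicator (ball 0 1) \<xi> * G z \<xi>) = (\<integral>\<^sup>+r. ennreal (K z \<xi> r) \<partial>lborel)" .
  show "ennreal (indicator (ball 0 1) \<xi> * G z \<xi>) \<le> (\<integral>\<^sup>+r. ennreal (K z \<xi> r) \<partial>lborel)"
  proof (cases "\<xi> = z")
    case True
    thus ?thesis by (simp add: G_def phi_def)
  qed (use main in simp)
qed

lemma inner:
  "(\<integral>\<^sup>+\<xi>. ennreal (K z \<xi> r) \<partial>lborel) =
     ennreal (- 2 * ln r / r * indicator {0<..1} r) * emeasure lborel (ball 0 1 \<inter> {\<xi>. cmod (phi z \<xi>) \<le> r})"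
proof -
  have nn: "0 \<le> - 2 * ln r / r * indicator {0<..1} r"
    by (auto simp: indicator_def intro!: w_nonneg w_nonneg2)
  have "(\<integral>\<^sup>+\<xi>. ennreal (K z \<xi> r) \<partial>lborel) =
     (\<integral>\<^sup>+\<xi>. ennreal (- 2 * ln r / r * indicator {0<..1} r) * indicator (ball 0 1 \<inter> {\<xi>. cmod (phi z \<xi>) \<le> r}) \<xi> \<partial>lborel)"
    by (rule nn_integral_cong) (auto simp: K_def indicator_def)
  also have "\<dots> = ennreal (- 2 * ln r / r * indicator {0<..1} r) * emeasure lborel (ball 0 1 \<inter> {\<xi>. cmod (phi z \<xi>) \<le> r})"
    by (rule nn_integral_cmult_indicator) simp
  finally show ?thesis .
qed

lemma final_integral:
  "(\<integral>\<^sup>+r. ennreal (- 2 * ln r / r * indicator {0<..1} r) * ennreal (pi * r^2) \<partial>lborel) = ennreal (pi / 2)"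
proof -
  have "(\<integral>\<^sup>+r. ennreal (- 2 * ln r / r * indicator {0<..1} r) * ennreal (pi * r^2) \<partial>lborel)
      = (\<integral>\<^sup>+r. ennreal (pi * (- 2 * r * ln r)) * indicator {0..1} r \<partial>lborel)"
  proof (rule nn_integral_cong)
    fix r :: real
    show "ennreal (- 2 * ln r / r * indicator {0<..1} r) * ennreal (pi * r^2) = ennreal (pi * (- 2 * r * ln r)) * indicator {0..1} r"
    proof (cases "0 < r \<and> r \<le> 1")
      case True
      hence "ennreal (- 2 * ln r / r * indicator {0<..1} r) * ennreal (pi * r^2) = ennreal (- 2 * ln r / r * (pi * r^2))"
      proof -
        have i1: "indicator {0<..1} r = (1::real)" using True by (simp add: indicator_def)
        show ?thesis unfolding i1 mult_1_right by (rule ennreal_mult'[symmetric]) (use True w_nonneg in auto)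
      qed
      also have "- 2 * ln r / r * (pi * r^2) = pi * (- 2 * r * ln r)" using True by (simp add: field_simps power2_eq_square)
      finally show ?thesis using True by simp
    qed (auto simp: indicator_def)
  qed
  also have "\<dots> = ennreal (pi * (1/2))"
  proof (rule nn_integral_has_integral_lebesgue')
    show "((\<lambda>r. pi * (- 2 * r * ln r)) has_integral pi * (1/2)) {0..1}"
      using has_integral_mult_right[OF rlnr_has_integral, of pi] by simp
  next
    fix r :: real assume "r \<in> {0..1}"
    thus "0 \<le> pi * (- 2 * r * ln r)"
      by (cases "r = 0") (auto intro!: mult_nonneg_nonpos simp: ln_le_zero_iff)
  qed
  finally show ?thesis by simp
qed

lemma layer:
  assumes z: "cmod z < 1"
  shows "(\<integral>\<^sup>+\<xi>. ennreal (indicator (ball 0 1) \<xi> * G z \<xi>) \<partial>lborel) \<le> ennreal (pi / 2)"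
    and "z = 0 \<Longrightarrow> (\<integral>\<^sup>+\<xi>. ennreal (indicator (ball 0 1) \<xi> * G z \<xi>) \<partial>lborel) = ennreal (pi / 2)"
proof -
  have fub: "(\<integral>\<^sup>+\<xi>. (\<integral>\<^sup>+r. ennreal (K z \<xi> r) \<partial>lborel) \<partial>lborel) =
        (\<integral>\<^sup>+r. ennreal (- 2 * ln r / r * indicator {0<..1} r) * emeasure lborel (ball 0 1 \<inter> {\<xi>. cmod (phi z \<xi>) \<le> r}) \<partial>lborel)"
    using lborel_pair.Fubini'[of "\<lambda>\<xi> r. ennreal (K z \<xi> r)", OF K_meas] by (simp add: inner)
  have "(\<integral>\<^sup>+\<xi>. ennreal (indicator (ball 0 1) \<xi> * G z \<xi>) \<partial>lborel) \<le> (\<integral>\<^sup>+\<xi>. (\<integral>\<^sup>+r. ennreal (K z \<xi> r) \<partial>lborel) \<partial>lborel)"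
    by (rule nn_integral_mono) (rule pointwise(1)[OF z])
  also have "\<dots> \<le> (\<integral>\<^sup>+r. ennreal (- 2 * ln r / r * indicator {0<..1} r) * ennreal (pi * r^2) \<partial>lborel)"
    unfolding fub
  proof (rule nn_integral_mono)
    fix r :: real
    show "ennreal (- 2 * ln r / r * indicator {0<..1} r) * emeasure lborel (ball 0 1 \<inter> {\<xi>. cmod (phi z \<xi>) \<le> r})
        \<le> ennreal (- 2 * ln r / r * indicator {0<..1} r) * ennreal (pi * r^2)"
    proof (cases "0 < r \<and> r \<le> 1")
      case True
      thus ?thesis by (intro mult_left_mono meas_bound[OF z]) auto
    qed (auto simp: indicator_def)
  qed
  finally show "(\<integral>\<^sup>+\<xi>. ennreal (indicator (ball 0 1) \<xi> * G z \<xi>) \<partial>lborel) \<le> ennreal (pi / 2)"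
    using final_integral by simp
  assume z0: "z = 0"
  have "(\<integral>\<^sup>+\<xi>. ennreal (indicator (ball 0 1) \<xi> * G z \<xi>) \<partial>lborel) = (\<integral>\<^sup>+\<xi>. (\<integral>\<^sup>+r. ennreal (K z \<xi> r) \<partial>lborel) \<partial>lborel)"
    by (rule nn_integral_cong_AE) (use AE_lborel_singleton[of z] in \<open>auto elim!: eventually_mono intro: pointwise(2)[OF z]\<close>)
  also have "\<dots> = (\<integral>\<^sup>+r. ennreal (- 2 * ln r / r * indicator {0<..1} r) * ennreal (pi * r^2) \<partial>lborel)"
    unfolding fub
  proof (rule nn_integral_cong)
    fix r :: real
    show "ennreal (- 2 * ln r / r * indicator {0<..1} r) * emeasure lborel (ball 0 1 \<inter> {\<xi>. cmod (phi z \<xi>) \<le> r})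
        = ennreal (- 2 * ln r / r * indicator {0<..1} r) * ennreal (pi * r^2)"
    proof (cases "0 < r \<and> r \<le> 1")
      case True
      thus ?thesis using meas_eq0[of r] z0 by simp
    qed (auto simp: indicator_def)
  qed
  finally show "(\<integral>\<^sup>+\<xi>. ennreal (indicator (ball 0 1) \<xi> * G z \<xi>) \<partial>lborel) = ennreal (pi / 2)"
    using final_integral by simp
qed




lemma green_sq: "(green_disc z \<xi>)^2 = G z \<xi> * (1 / (4 * pi^2))"
  unfolding green_disc_def G_def phi_def by (simp add: power_divide power_mult_distrib)

lemma green_meas[measurable]: "green_disc z \<in> borel_measurable borel"
  unfolding green_disc_def by measurable

lemma G_meas[measurable]: "G z \<in> borel_measurable borel"
  unfolding G_def by measurable

definition N :: "complex \<Rightarrow> ennreal" where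
  "N z = (\<integral>\<^sup>+\<xi>. ennreal (indicator (ball 0 1) \<xi> * (green_disc z \<xi>)^2) \<partial>lborel)"

lemma N_eq: "N z = (\<integral>\<^sup>+\<xi>. ennreal (indicator (ball 0 1) \<xi> * G z \<xi>) \<partial>lborel) * ennreal (1 / (4 * pi^2))"
proof -
  have "N z = (\<integral>\<^sup>+\<xi>. ennreal (indicator (ball 0 1) \<xi> * G z \<xi>) * ennreal (1 / (4 * pi^2)) \<partial>lborel)"
    unfolding N_def
  proof (rule nn_integral_cong)
    fix \<xi> :: complex
    show "ennreal (indicator (ball 0 1) \<xi> * (green_disc z \<xi>)^2) = ennreal (indicator (ball 0 1) \<xi> * G z \<xi>) * ennreal (1 / (4 * pi^2))"
      unfolding green_sq mult.assoc[symmetric] by (rule ennreal_mult'') simp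
  qed
  also have "\<dots> = (\<integral>\<^sup>+\<xi>. ennreal (indicator (ball 0 1) \<xi> * G z \<xi>) \<partial>lborel) * ennreal (1 / (4 * pi^2))"
    by (rule nn_integral_multc) measurable
  finally show ?thesis .
qed

lemma N_le: "cmod z < 1 \<Longrightarrow> N z \<le> ennreal (1 / (8 * pi))"
proof -
  assume z: "cmod z < 1"
  have "N z \<le> ennreal (pi / 2) * ennreal (1 / (4 * pi^2))"
    unfolding N_eq by (intro mult_right_mono layer(1)[OF z]) auto
  also have "\<dots> = ennreal (1 / (8 * pi))"
    by (subst ennreal_mult'[symmetric]) (auto simp: field_simps power2_eq_square)
  finally show ?thesis .
qed

lemma N_0: "N 0 = ennreal (1 / (8 * pi))"
proof -
  have "N 0 = ennreal (pi / 2) * ennreal (1 / (4 * pi^2))"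
    unfolding N_eq by (subst layer(2)) auto
  also have "\<dots> = ennreal (1 / (8 * pi))"
    by (subst ennreal_mult'[symmetric]) (auto simp: field_simps power2_eq_square)
  finally show ?thesis .
qed

lemma L2_eq: "L2_norm_disc (green_disc z) = sqrt (enn2real (N z))"
proof -
  have "set_lebesgue_integral lborel (ball 0 1) (\<lambda>\<xi>. (green_disc z \<xi>)^2)
      = integral\<^sup>L lborel (\<lambda>\<xi>. indicator (ball 0 1) \<xi> * (green_disc z \<xi>)^2)"
    unfolding set_lebesgue_integral_def by simp
  also have "\<dots> = enn2real (N z)"
    unfolding N_def by (rule integral_eq_nn_integral) auto
  finally show ?thesis unfolding L2_norm_disc_def by simp
qed

theorem lemma2:
  fixes z :: complex
  assumes "z \<in> ball 0 1"
  shows "set_integrable lborel (ball 0 1) (\<lambda>\<xi>. (green_disc z \<xi>)\<^sup>2) \<and>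
         L2_norm_disc (green_disc z) \<le> L2_norm_disc (green_disc 0) \<and>
         L2_norm_disc (green_disc 0) = 1 / sqrt (8 * pi)"
proof (intro conjI)
  have z: "cmod z < 1" using assms by simp
  show "set_integrable lborel (ball 0 1) (\<lambda>\<xi>. (green_disc z \<xi>)\<^sup>2)"
    unfolding set_integrable_def
  proof (rule integrableI_bounded)
    show "(\<lambda>\<xi>. indicator (ball 0 1) \<xi> *\<^sub>R (green_disc z \<xi>)\<^sup>2) \<in> borel_measurable lborel" by measurable
    have "(\<integral>\<^sup>+\<xi>. ennreal (norm (indicator (ball 0 1) \<xi> *\<^sub>R (green_disc z \<xi>)\<^sup>2)) \<partial>lborel) = N z"
      unfolding N_def by (rule nn_integral_cong) (simp add: indicator_def)
    also have "\<dots> < \<infinity>" using N_le[OF z] by (simp add: le_less_trans)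
    finally show "(\<integral>\<^sup>+\<xi>. ennreal (norm (indicator (ball 0 1) \<xi> *\<^sub>R (green_disc z \<xi>)\<^sup>2)) \<partial>lborel) < \<infinity>" .
  qed
  show "L2_norm_disc (green_disc z) \<le> L2_norm_disc (green_disc 0)"
  proof -
    have "enn2real (N z) \<le> enn2real (ennreal (1 / (8 * pi)))"
      by (rule enn2real_mono[OF N_le[OF z]]) simp
    thus ?thesis unfolding L2_eq N_0 by simp
  qed
  show "L2_norm_disc (green_disc 0) = 1 / sqrt (8 * pi)"
    unfolding L2_eq N_0 by (simp add: real_sqrt_divide)
qed


end
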